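(* Let $\mathbb{F}$ be a field of characteristic $2$. For every $w\in W^{(2)}$ there is a cycle in $\widetilde H_3(\mathbb{F})$ whose voltage with respect to $\ell$ equals $w$.
   Context: Let $V=\mathbb{F}^4$, $V^*$ its dual. $\widetilde H_3(\mathbb{F})$ is the graph whose vertices are tensors $v\otimes f\in V\otimes V^*$ with $f(v)\neq0$, with $v\otimes f\perp w\otimes g$ iff $f(w)=g(v)=0$. Let $W=\bigwedge^2V$, fix an isomorphism $\chi:\bigwedge^4V\to\mathbb{F}$, identify $\bigwedge^2V^*$ with $(\bigwedge^2V)^*$ via $(f_1\wedge f_2)(v_1\wedge v_2)=f_1(v_1)f_2(v_2)-f_1(v_2)f_2(v_1)$, let $\psi:\bigwedge^2V\to\bigwedge^2V^*$ be $\psi(\hat w)(\hat v)=\chi(\hat v\wedge\hat w)$ and $\phi=\psi^{-1}$. $S_2(W)$ is the symmetric square of $W$ (product $ab$, $a^2=aa$), and $W^{(2)}=\langle\hat w^2:\hat w\in W\rangle$. $\ell$ assigns to the dart from $v_1\otimes h_1$ to $v_2\otimes h_2$ the element $h_1(v_1)^{-1}h_2(v_2)^{-1}(v_1\wedge v_2)\,\phi(h_1\wedge h_2)$ of $S_2(W)$; the voltage of a cycle is the sum of the voltages of its darts. *)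

theory Defs
  imports "HOL-Analysis.Analysis" "HOL-Library.Uprod"
begin

text \<open>Coordinates. V = F^4 is modelled as 'a^4, V* also as 'a^4 with the
standard pairing. Indices of type 4 are 0,1,2,3.\<close>

definition ev :: "'a::field ^ 4 \<Rightarrow> 'a ^ 4 \<Rightarrow> 'a" where
  "ev f v = (\<Sum>i\<in>UNIV. f $ i * v $ i)"

text \<open>Bivectors (elements of the exterior square of V, resp. of V* ) are
modelled as alternating 4x4 matrices: v1 wedge v2 has (i,j)-entry
v1_i v2_j - v1_j v2_i.\<close>

definition alternating :: "'a::field ^ 4 ^ 4 \<Rightarrow> bool" where
  "alternating A \<longleftrightarrow> (\<forall>i. A $ i $ i = 0) \<and> (\<forall>i j. A $ i $ j = - A $ j $ i)"

definition wedge :: "'a::field ^ 4 \<Rightarrow> 'a ^ 4 \<Rightarrow> 'a ^ 4 ^ 4" where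
  "wedge v w = (\<chi> i j. v $ i * w $ j - v $ j * w $ i)"

text \<open>Pairing of the exterior square of V* with the exterior square of V;
on decomposables it gives f1(v1)f2(v2) - f1(v2)f2(v1).\<close>

definition pairing :: "'a::field ^ 4 ^ 4 \<Rightarrow> 'a ^ 4 ^ 4 \<Rightarrow> 'a" where
  "pairing H A = (\<Sum>(i,j)\<in>{(i,j). i < j}. H $ i $ j * A $ i $ j)"

text \<open>Standard coordinate of A wedge C in the top exterior power
(coefficient of e0 e1 e2 e3).\<close>

definition vol :: "'a::field ^ 4 ^ 4 \<Rightarrow> 'a ^ 4 ^ 4 \<Rightarrow> 'a" where
  "vol A C = A$0$1 * C$2$3 - A$0$2 * C$1$3 + A$0$3 * C$1$2
           + A$1$2 * C$0$3 - A$1$3 * C$0$2 + A$2$3 * C$0$1"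

text \<open>Every isomorphism chi from the top exterior power to F is c times the
standard coordinate for some c \<noteq> 0; chi(x) = c * vol.\<close>

definition psi :: "'a::field \<Rightarrow> 'a ^ 4 ^ 4 \<Rightarrow> 'a ^ 4 ^ 4" where
  "psi c W = (THE H. alternating H \<and> (\<forall>A. alternating A \<longrightarrow> pairing H A = c * vol A W))"

definition phi :: "'a::field \<Rightarrow> 'a ^ 4 ^ 4 \<Rightarrow> 'a ^ 4 ^ 4" where
  "phi c H = (THE W. alternating W \<and> psi c W = H)"

text \<open>Symmetric square S_2(W), in coordinates w.r.t. the basis e_i wedge e_j
(i < j) of W: an element is the coefficient function on unordered pairs of basis
indices (monomials). wcoord gives the coordinates of a bivector.\<close>

type_synonym 'a S2 = "(4 \<times> 4) uprod \<Rightarrow> 'a"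

definition wcoord :: "'a::field ^ 4 ^ 4 \<Rightarrow> 4 \<times> 4 \<Rightarrow> 'a" where
  "wcoord A p = (if fst p < snd p then A $ fst p $ snd p else 0)"

definition sprod :: "'a::field ^ 4 ^ 4 \<Rightarrow> 'a ^ 4 ^ 4 \<Rightarrow> 'a S2" where
  "sprod A C u = (\<Sum>(p,q)\<in>{(p,q). Upair p q = u}. wcoord A p * wcoord C q)"

definition W2 :: "'a::field S2 set" where
  "W2 = {w. \<exists>(n::nat) (a::nat \<Rightarrow> 'a) (A::nat \<Rightarrow> 'a ^ 4 ^ 4).
           (\<forall>k<n. alternating (A k)) \<and> w = (\<lambda>u. \<Sum>k<n. a k * sprod (A k) (A k) u)}"

text \<open>The graph H_3(F): a vertex v tensor f is given by a representative
pair (v,f) with f(v) \<noteq> 0.\<close>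

definition is_vertex :: "('a::field ^ 4) \<times> ('a ^ 4) \<Rightarrow> bool" where
  "is_vertex x \<longleftrightarrow> ev (snd x) (fst x) \<noteq> 0"

definition adj :: "('a::field ^ 4) \<times> ('a ^ 4) \<Rightarrow> ('a ^ 4) \<times> ('a ^ 4) \<Rightarrow> bool" where
  "adj x y \<longleftrightarrow> ev (snd x) (fst y) = 0 \<and> ev (snd y) (fst x) = 0"

definition ell :: "'a::field \<Rightarrow> ('a ^ 4) \<times> ('a ^ 4) \<Rightarrow> ('a ^ 4) \<times> ('a ^ 4) \<Rightarrow> 'a S2" where
  "ell c x y = (\<lambda>u. inverse (ev (snd x) (fst x)) * inverse (ev (snd y) (fst y))
       * sprod (wedge (fst x) (fst y)) (phi c (wedge (snd x) (snd y))) u)"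

definition closed_walk :: "(('a::field ^ 4) \<times> ('a ^ 4)) list \<Rightarrow> bool" where
  "closed_walk xs \<longleftrightarrow> xs \<noteq> [] \<and> (\<forall>x\<in>set xs. is_vertex x)
     \<and> (\<forall>i<length xs. adj (xs ! i) (xs ! ((i + 1) mod length xs)))"

definition voltage :: "'a::field \<Rightarrow> (('a ^ 4) \<times> ('a ^ 4)) list \<Rightarrow> 'a S2" where
  "voltage c xs = (\<lambda>u. \<Sum>i<length xs. ell c (xs ! i) (xs ! ((i + 1) mod length xs)) u)"

end

theory Submission
  imports Defs
begin

lemma sum_split_add: "sum f {..<m + (n::nat)} = sum f {..<m} + (\<Sum>i<n. f (m+i))"
  by (induction n) (simp_all add: add.assoc)

lemma ex4: "(x::4) = 0 \<or> x = 1 \<or> x = 2 \<or> x = 3"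
  using exhaust_4[of x] by auto

lemma all4: "(\<forall>x::4. P x) \<longleftrightarrow> P 0 \<and> P 1 \<and> P 2 \<and> P 3"
  using ex4 by metis

lemma lt4 [simp]:
  "(0::4) < 1" "(0::4) < 2" "(0::4) < 3" "(1::4) < 2" "(1::4) < 3" "(2::4) < 3"
  "\<not> (0::4) < 0" "\<not> (1::4) < 0" "\<not> (2::4) < 0" "\<not> (3::4) < 0" "\<not> (1::4) < 1" "\<not> (2::4) < 1" "\<not> (3::4) < 1"
  "\<not> (2::4) < 2" "\<not> (3::4) < 2" "\<not> (3::4) < 3"
  by (simp_all add: less_bit0_def bit0.Rep_numeral bit0.Rep_0 bit0.Rep_1)

definition vec4 :: "'a \<Rightarrow> 'a \<Rightarrow> 'a \<Rightarrow> 'a \<Rightarrow> 'a ^ 4" where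
  "vec4 a b c d = (\<chi> i. if i = 0 then a else if i = 1 then b else if i = 2 then c else d)"

lemma vec4_nth [simp]: "vec4 a b c d $ 0 = a" "vec4 a b c d $ 1 = b"
  "vec4 a b c d $ 2 = c" "vec4 a b c d $ 3 = d"
  by (simp_all add: vec4_def)

lemma sum4: "sum f (UNIV::4 set) = f 0 + f 1 + f 2 + f 3"
proof -
  have h: "(4::4) = 0" by simp
  show ?thesis using sum_4[of f] unfolding h by (simp add: ac_simps)
qed

lemma ev4: "ev f v = f$0 * v$0 + f$1 * v$1 + f$2 * v$2 + f$3 * v$3"
  by (simp add: ev_def sum4)

lemma pairs_lt: "{(i,j). (i::4) < j} = {(0,1),(0,2),(0,3),(1,2),(1,3),(2,3)}"
proof (rule set_eqI)
  fix p :: "4 \<times> 4"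
  obtain i j where p: "p = (i,j)" by fastforce
  show "p \<in> {(i,j). i < j} \<longleftrightarrow> p \<in> {(0,1),(0,2),(0,3),(1,2),(1,3),(2,3)}"
    unfolding p using ex4[of i] ex4[of j] by (elim disjE) simp_all
qed

lemma pairing4: "pairing H A = H$0$1*A$0$1 + H$0$2*A$0$2 + H$0$3*A$0$3 + H$1$2*A$1$2 + H$1$3*A$1$3 + H$2$3*A$2$3"
  unfolding pairing_def pairs_lt by (simp add: ac_simps)

definition alt :: "(4 \<Rightarrow> 4 \<Rightarrow> 'a::field) \<Rightarrow> 'a^4^4" where
  "alt f = (\<chi> i j. if i < j then f i j else if j < i then - f j i else 0)"

lemma alternating_alt: "alternating (alt f)"
  unfolding alternating_def alt_def by auto

definition E :: "'a::field \<Rightarrow> 'a^4^4 \<Rightarrow> 'a^4^4" where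
  "E c W = alt (\<lambda>i j. c * (if i=0 \<and> j=1 then W$2$3 else if i=0 \<and> j=2 then -W$1$3
      else if i=0 \<and> j=3 then W$1$2 else if i=1 \<and> j=2 then W$0$3
      else if i=1 \<and> j=3 then -W$0$2 else W$0$1))"

lemma E_nth [simp]:
  "E c W $0$1 = c*W$2$3" "E c W $0$2 = -(c*W$1$3)" "E c W $0$3 = c*W$1$2"
  "E c W $1$2 = c*W$0$3" "E c W $1$3 = -(c*W$0$2)" "E c W $2$3 = c*W$0$1"
  "E c W $1$0 = -(c*W$2$3)" "E c W $2$0 = c*W$1$3" "E c W $3$0 = -(c*W$1$2)"
  "E c W $2$1 = -(c*W$0$3)" "E c W $3$1 = c*W$0$2" "E c W $3$2 = -(c*W$0$1)"
  "E c W $0$0 = 0" "E c W $1$1 = 0" "E c W $2$2 = 0" "E c W $3$3 = 0"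
  by (simp_all add: E_def alt_def)

lemma mat_eq4: "(A::'a^4^4) = B \<longleftrightarrow> (\<forall>i j. A$i$j = B$i$j)"
  by (simp add: vec_eq_iff)

lemma alt_entries:
  assumes "alternating A"
  shows "A$0$0 = 0" "A$1$1 = 0" "A$2$2 = 0" "A$3$3 = 0"
   "A$1$0 = - A$0$1" "A$2$0 = - A$0$2" "A$3$0 = - A$0$3"
   "A$2$1 = - A$1$2" "A$3$1 = - A$1$3" "A$3$2 = - A$2$3"
  using assms unfolding alternating_def by metis+

lemma alt_eqI:
  assumes "alternating A" "alternating B"
    "A$0$1 = B$0$1" "A$0$2 = B$0$2" "A$0$3 = B$0$3"
    "A$1$2 = B$1$2" "A$1$3 = B$1$3" "A$2$3 = B$2$3"
  shows "A = B"
  unfolding mat_eq4 all4 using alt_entries[OF assms(1)] alt_entries[OF assms(2)] assms(3-) by simp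

definition U :: "4 \<Rightarrow> 4 \<Rightarrow> 'a::field^4^4" where
  "U k l = (\<chi> i j. if i = k \<and> j = l then 1 else if i = l \<and> j = k then -1 else 0)"

lemma alternating_U: "k \<noteq> l \<Longrightarrow> alternating (U k l)"
  unfolding alternating_def U_def by auto

lemma alternating_E: "alternating (E c W)"
  unfolding E_def by (rule alternating_alt)

lemma psi_eq: "psi c W = E c W"
  unfolding psi_def
proof (rule the_equality)
  show "alternating (E c W) \<and> (\<forall>A. alternating A \<longrightarrow> pairing (E c W) A = c * vol A W)"
    by (auto simp: alternating_E pairing4 vol_def algebra_simps)
next
  fix H assume H: "alternating H \<and> (\<forall>A. alternating A \<longrightarrow> pairing H A = c * vol A W)"
  have h: "pairing H (U k l) = c * vol (U k l) W" if "k \<noteq> l" for k l :: 4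
    using H alternating_U[OF that] by blast
  show "H = E c W"
    apply (rule alt_eqI)
    using H alternating_E h[of 0 1] h[of 0 2] h[of 0 3] h[of 1 2] h[of 1 3] h[of 2 3]
    by (simp_all add: pairing4 vol_def U_def)
qed

lemma EE:
  assumes "alternating X" "c \<noteq> 0"
  shows "E (inverse c) (E c X) = X"
  by (rule alt_eqI) (simp_all add: alternating_E assms)

lemma phi_eq:
  assumes "alternating H" "c \<noteq> 0"
  shows "phi c H = E (inverse c) H"
  unfolding phi_def psi_eq
proof (rule the_equality)
  show "alternating (E (inverse c) H) \<and> E c (E (inverse c) H) = H"
    using EE[OF assms(1), of "inverse c"] assms by (simp add: alternating_E)
next
  fix W assume "alternating W \<and> E c W = H"
  then show "W = E (inverse c) H" using EE[of W c] assms by auto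
qed

lemma alternating_wedge: "alternating (wedge v w)"
  unfolding alternating_def wedge_def by (simp add: algebra_simps)

lemma wedge_nth [simp]: "wedge v w $ i $ j = v $ i * w $ j - v $ j * w $ i"
  by (simp add: wedge_def)

lemma Upair_set: "{(p',q'). Upair p' q' = Upair p q} = {(p,q),(q,p)}"
  by auto

lemma sprod_Upair: "sprod A C (Upair p q) =
  (if p = q then wcoord A p * wcoord C p else wcoord A p * wcoord C q + wcoord A q * wcoord C p)"
  unfolding sprod_def Upair_set by auto

lemma wcoord_invalid: "\<not> fst p < snd p \<Longrightarrow> wcoord A p = 0"
  by (simp add: wcoord_def)

lemma sprod_invalid: "\<not> fst p < snd p \<Longrightarrow> sprod A C (Upair p q) = 0"
  "\<not> fst p < snd p \<Longrightarrow> sprod A C (Upair q p) = 0"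
  by (auto simp add: sprod_Upair wcoord_invalid)

lemma voltage_invalid: "\<not> fst p < snd p \<Longrightarrow> voltage c xs (Upair p q) = 0"
  "\<not> fst p < snd p \<Longrightarrow> voltage c xs (Upair q p) = 0"
  by (simp_all add: voltage_def ell_def sprod_invalid)

lemma valid6: "fst (p::4\<times>4) < snd p \<Longrightarrow> p = (0,1) \<or> p = (0,2) \<or> p = (0,3) \<or> p = (1,2) \<or> p = (1,3) \<or> p = (2,3)"
proof -
  obtain i j where p: "p = (i,j)" by fastforce
  assume "fst p < snd p"
  then show ?thesis unfolding p using ex4[of i] ex4[of j] by (elim disjE) simp_all
qed


lemma append_idx1:
  assumes "xs \<noteq> []" "ys \<noteq> []" "hd xs = hd ys" "i < length xs"
  shows "(xs@ys)!i = xs!i"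
    "(xs@ys)!((i+1) mod (length xs + length ys)) = xs!((i+1) mod length xs)"
proof -
  show "(xs@ys)!i = xs!i" using assms by (simp add: nth_append)
  show "(xs@ys)!((i+1) mod (length xs + length ys)) = xs!((i+1) mod length xs)"
  proof (cases "i+1 < length xs")
    case True then show ?thesis by (simp add: nth_append)
  next
    case False
    then have m: "i+1 = length xs" using assms by simp
    have "length ys > 0" using assms by simp
    then have "(i+1) mod (length xs + length ys) = length xs" using m by simp
    then show ?thesis using m assms by (simp add: nth_append hd_conv_nth)
  qed
qed

lemma append_idx2:
  assumes "xs \<noteq> []" "ys \<noteq> []" "hd xs = hd ys" "j < length ys"
  shows "(xs@ys)!(length xs + j) = ys!j"
    "(xs@ys)!((length xs + j + 1) mod (length xs + length ys)) = ys!((j+1) mod length ys)"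
proof -
  show "(xs@ys)!(length xs + j) = ys!j" using assms by (simp add: nth_append)
  show "(xs@ys)!((length xs + j + 1) mod (length xs + length ys)) = ys!((j+1) mod length ys)"
  proof (cases "j+1 < length ys")
    case True
    then have "(length xs + j + 1) mod (length xs + length ys) = length xs + (j+1)" by simp
    then show ?thesis using True by (simp add: nth_append)
  next
    case False
    then have m: "j+1 = length ys" using assms by simp
    then have e: "length xs + j + 1 = length xs + length ys" by simp
    have "(length xs + j + 1) mod (length xs + length ys) = 0" unfolding e by simp
    then show ?thesis using m assms by (simp add: nth_append hd_conv_nth)
  qed
qed

lemma voltage_append:
  assumes "xs \<noteq> []" "ys \<noteq> []" "hd xs = hd ys"
  shows "voltage c (xs@ys) = (\<lambda>u. voltage c xs u + voltage c ys u)"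
proof
  fix u
  have "voltage c (xs@ys) u = (\<Sum>i<length xs + length ys. ell c ((xs@ys) ! i) ((xs@ys) ! ((i + 1) mod (length xs + length ys))) u)"
    by (simp add: voltage_def)
  also have "\<dots> = (\<Sum>i<length xs. ell c ((xs@ys) ! i) ((xs@ys) ! ((i + 1) mod (length xs + length ys))) u)
     + (\<Sum>j<length ys. ell c ((xs@ys) ! (length xs + j)) ((xs@ys) ! ((length xs + j + 1) mod (length xs + length ys))) u)"
    by (simp add: sum_split_add add.assoc)
  also have "\<dots> = voltage c xs u + voltage c ys u"
    unfolding voltage_def using append_idx1[OF assms] append_idx2[OF assms]
    by (intro arg_cong2[where f="(+)"] sum.cong) auto
  finally show "voltage c (xs@ys) u = voltage c xs u + voltage c ys u" .
qed

lemma closed_walk_append: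
  assumes "closed_walk xs" "closed_walk ys" "hd xs = hd ys"
  shows "closed_walk (xs@ys)"
proof -
  have ne: "xs \<noteq> []" "ys \<noteq> []" using assms unfolding closed_walk_def by auto
  have "adj ((xs@ys) ! i) ((xs@ys) ! ((i + 1) mod length (xs@ys)))" if "i < length (xs@ys)" for i
  proof (cases "i < length xs")
    case True
    then show ?thesis using append_idx1[OF ne assms(3) True] assms(1) unfolding closed_walk_def by simp
  next
    case False
    define j where "j = i - length xs"
    have j: "i = length xs + j" "j < length ys" using False that unfolding j_def by auto
    then show ?thesis using append_idx2[OF ne assms(3) j(2)] assms(2) unfolding closed_walk_def by simp
  qed
  moreover have "\<forall>x\<in>set (xs@ys). is_vertex x" using assms(1,2) unfolding closed_walk_def by auto
  ultimately show ?thesis using ne unfolding closed_walk_def by simp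
qed

definition sq :: "4\<times>4 \<Rightarrow> 'a::field S2" where
  "sq p u = (if u = Upair p p then 1 else 0)"

definition bv :: "('a::field^4) \<times> ('a^4)" where "bv = (vec4 0 0 0 1, vec4 0 0 0 1)"
definition bv2 :: "('a::field^4) \<times> ('a^4)" where "bv2 = (vec4 0 0 1 0, vec4 0 0 1 0)"

lemma sum4n: "(\<Sum>i<(4::nat). f i) = f 0 + f 1 + f 2 + f 3"
  by (simp add: eval_nat_numeral)

lemma all4n: "(\<forall>i<(4::nat). P i) \<longleftrightarrow> P 0 \<and> P 1 \<and> P 2 \<and> P 3"
  by (auto simp: eval_nat_numeral less_Suc_eq)

lemma cw4: "closed_walk [a,b,c,d] \<longleftrightarrow> is_vertex a \<and> is_vertex b \<and> is_vertex c \<and> is_vertex d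
   \<and> adj a b \<and> adj b c \<and> adj c d \<and> adj d a"
proof -
  have L: "length [a,b,c,d] = 4" by simp
  show ?thesis unfolding closed_walk_def L all4n by simp
qed

lemma volt4: "voltage c' [a,b,c,d] = (\<lambda>u. ell c' a b u + ell c' b c u + ell c' c d u + ell c' d a u)"
proof -
  have L: "length [a,b,c,d] = 4" by simp
  show ?thesis unfolding voltage_def L sum4n by simp
qed


lemma neg2: assumes two: "(2::'a::field) = 0" shows "-x = (x::'a)"
proof -
  have "x + x = 2 * x" by simp
  then have "x + x = 0" using two by simp
  then show ?thesis by (simp add: add_eq_0_iff2)
qed

definition C01 :: "'a::field \<Rightarrow> (('a^4) \<times> ('a^4)) list" where
  "C01 t = [bv, bv2, (vec4 0 1 0 0, vec4 0 1 0 1), (vec4 1 0 0 0, vec4 1 0 t 0)]"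

lemma C01_walk: "closed_walk (C01 t)"
  unfolding cw4 C01_def bv_def bv2_def
  by (simp add: is_vertex_def adj_def ev4)

lemma C01_volt:
  assumes two: "(2::'a::field) = 0" and c: "c \<noteq> 0"
  shows "voltage c (C01 (t::'a)) = (\<lambda>u. inverse c * t * sq (0,1) u)"
proof
  fix u :: "(4\<times>4) uprod"
  note neg = neg2[OF two]
  obtain p q where u: "u = Upair p q" by (cases u) auto
  show "voltage c (C01 t) u = inverse c * t * sq (0,1) u"
  proof (cases "fst p < snd p \<and> fst q < snd q")
    case False
    have v0: "voltage c (C01 t) (Upair p q) = 0" using False by (metis voltage_invalid)
    have "Upair p q \<noteq> Upair (0,1) (0,1)" using False by auto
    then have s0: "sq (0,1) (Upair p q) = (0::'a)" unfolding sq_def by (rule if_not_P)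
    show ?thesis by (simp add: u s0 v0)
  next
    case True
    have P: "p = (0,1) \<or> p = (0,2) \<or> p = (0,3) \<or> p = (1,2) \<or> p = (1,3) \<or> p = (2,3)"
      using True valid6[of p] by blast
    have Q: "q = (0,1) \<or> q = (0,2) \<or> q = (0,3) \<or> q = (1,2) \<or> q = (1,3) \<or> q = (2,3)"
      using True valid6[of q] by blast
    show ?thesis unfolding u using P Q
      apply (elim disjE)
      apply (simp_all add: volt4 C01_def bv_def bv2_def ell_def ev4 phi_eq[OF alternating_wedge c]
          sprod_Upair wcoord_def sq_def neg two)
      done
  qed
qed

definition C02 :: "'a::field \<Rightarrow> (('a^4) \<times> ('a^4)) list" where
  "C02 t = [bv, bv2, (vec4 1 0 0 0, vec4 1 0 0 1), (vec4 0 0 1 0, vec4 0 t 1 0)]"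

lemma C02_walk: "closed_walk (C02 t)"
  unfolding cw4 C02_def bv_def bv2_def
  by (simp add: is_vertex_def adj_def ev4)

lemma C02_volt:
  assumes two: "(2::'a::field) = 0" and c: "c \<noteq> 0"
  shows "voltage c (C02 (t::'a)) = (\<lambda>u. inverse c * t * sq (0,2) u)"
proof
  fix u :: "(4\<times>4) uprod"
  note neg = neg2[OF two]
  obtain p q where u: "u = Upair p q" by (cases u) auto
  show "voltage c (C02 t) u = inverse c * t * sq (0,2) u"
  proof (cases "fst p < snd p \<and> fst q < snd q")
    case False
    have v0: "voltage c (C02 t) (Upair p q) = 0" using False by (metis voltage_invalid)
    have "Upair p q \<noteq> Upair (0,2) (0,2)" using False by auto
    then have s0: "sq (0,2) (Upair p q) = (0::'a)" unfolding sq_def by (rule if_not_P)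
    show ?thesis by (simp add: u s0 v0)
  next
    case True
    have P: "p = (0,1) \<or> p = (0,2) \<or> p = (0,3) \<or> p = (1,2) \<or> p = (1,3) \<or> p = (2,3)"
      using True valid6[of p] by blast
    have Q: "q = (0,1) \<or> q = (0,2) \<or> q = (0,3) \<or> q = (1,2) \<or> q = (1,3) \<or> q = (2,3)"
      using True valid6[of q] by blast
    show ?thesis unfolding u using P Q
      apply (elim disjE)
      apply (simp_all add: volt4 C02_def bv_def bv2_def ell_def ev4 phi_eq[OF alternating_wedge c]
          sprod_Upair wcoord_def sq_def neg two)
      done
  qed
qed

definition C03 :: "'a::field \<Rightarrow> (('a^4) \<times> ('a^4)) list" where
  "C03 t = [bv, bv2, (vec4 0 0 0 1, vec4 0 1 0 1), (vec4 1 0 0 0, vec4 1 0 t 0)]"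

lemma C03_walk: "closed_walk (C03 t)"
  unfolding cw4 C03_def bv_def bv2_def
  by (simp add: is_vertex_def adj_def ev4)

lemma C03_volt:
  assumes two: "(2::'a::field) = 0" and c: "c \<noteq> 0"
  shows "voltage c (C03 (t::'a)) = (\<lambda>u. inverse c * t * sq (0,3) u)"
proof
  fix u :: "(4\<times>4) uprod"
  note neg = neg2[OF two]
  obtain p q where u: "u = Upair p q" by (cases u) auto
  show "voltage c (C03 t) u = inverse c * t * sq (0,3) u"
  proof (cases "fst p < snd p \<and> fst q < snd q")
    case False
    have v0: "voltage c (C03 t) (Upair p q) = 0" using False by (metis voltage_invalid)
    have "Upair p q \<noteq> Upair (0,3) (0,3)" using False by auto
    then have s0: "sq (0,3) (Upair p q) = (0::'a)" unfolding sq_def by (rule if_not_P)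
    show ?thesis by (simp add: u s0 v0)
  next
    case True
    have P: "p = (0,1) \<or> p = (0,2) \<or> p = (0,3) \<or> p = (1,2) \<or> p = (1,3) \<or> p = (2,3)"
      using True valid6[of p] by blast
    have Q: "q = (0,1) \<or> q = (0,2) \<or> q = (0,3) \<or> q = (1,2) \<or> q = (1,3) \<or> q = (2,3)"
      using True valid6[of q] by blast
    show ?thesis unfolding u using P Q
      apply (elim disjE)
      apply (simp_all add: volt4 C03_def bv_def bv2_def ell_def ev4 phi_eq[OF alternating_wedge c]
          sprod_Upair wcoord_def sq_def neg two)
      done
  qed
qed

definition C12 :: "'a::field \<Rightarrow> (('a^4) \<times> ('a^4)) list" where
  "C12 t = [bv, bv2, (vec4 0 1 0 0, vec4 0 1 0 1), (vec4 0 0 1 0, vec4 t 0 1 0)]"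

lemma C12_walk: "closed_walk (C12 t)"
  unfolding cw4 C12_def bv_def bv2_def
  by (simp add: is_vertex_def adj_def ev4)

lemma C12_volt:
  assumes two: "(2::'a::field) = 0" and c: "c \<noteq> 0"
  shows "voltage c (C12 (t::'a)) = (\<lambda>u. inverse c * t * sq (1,2) u)"
proof
  fix u :: "(4\<times>4) uprod"
  note neg = neg2[OF two]
  obtain p q where u: "u = Upair p q" by (cases u) auto
  show "voltage c (C12 t) u = inverse c * t * sq (1,2) u"
  proof (cases "fst p < snd p \<and> fst q < snd q")
    case False
    have v0: "voltage c (C12 t) (Upair p q) = 0" using False by (metis voltage_invalid)
    have "Upair p q \<noteq> Upair (1,2) (1,2)" using False by auto
    then have s0: "sq (1,2) (Upair p q) = (0::'a)" unfolding sq_def by (rule if_not_P)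
    show ?thesis by (simp add: u s0 v0)
  next
    case True
    have P: "p = (0,1) \<or> p = (0,2) \<or> p = (0,3) \<or> p = (1,2) \<or> p = (1,3) \<or> p = (2,3)"
      using True valid6[of p] by blast
    have Q: "q = (0,1) \<or> q = (0,2) \<or> q = (0,3) \<or> q = (1,2) \<or> q = (1,3) \<or> q = (2,3)"
      using True valid6[of q] by blast
    show ?thesis unfolding u using P Q
      apply (elim disjE)
      apply (simp_all add: volt4 C12_def bv_def bv2_def ell_def ev4 phi_eq[OF alternating_wedge c]
          sprod_Upair wcoord_def sq_def neg two)
      done
  qed
qed

definition C13 :: "'a::field \<Rightarrow> (('a^4) \<times> ('a^4)) list" where
  "C13 t = [bv, bv2, (vec4 0 0 0 1, vec4 1 0 0 1), (vec4 0 1 0 0, vec4 0 1 t 0)]"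

lemma C13_walk: "closed_walk (C13 t)"
  unfolding cw4 C13_def bv_def bv2_def
  by (simp add: is_vertex_def adj_def ev4)

lemma C13_volt:
  assumes two: "(2::'a::field) = 0" and c: "c \<noteq> 0"
  shows "voltage c (C13 (t::'a)) = (\<lambda>u. inverse c * t * sq (1,3) u)"
proof
  fix u :: "(4\<times>4) uprod"
  note neg = neg2[OF two]
  obtain p q where u: "u = Upair p q" by (cases u) auto
  show "voltage c (C13 t) u = inverse c * t * sq (1,3) u"
  proof (cases "fst p < snd p \<and> fst q < snd q")
    case False
    have v0: "voltage c (C13 t) (Upair p q) = 0" using False by (metis voltage_invalid)
    have "Upair p q \<noteq> Upair (1,3) (1,3)" using False by auto
    then have s0: "sq (1,3) (Upair p q) = (0::'a)" unfolding sq_def by (rule if_not_P)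
    show ?thesis by (simp add: u s0 v0)
  next
    case True
    have P: "p = (0,1) \<or> p = (0,2) \<or> p = (0,3) \<or> p = (1,2) \<or> p = (1,3) \<or> p = (2,3)"
      using True valid6[of p] by blast
    have Q: "q = (0,1) \<or> q = (0,2) \<or> q = (0,3) \<or> q = (1,2) \<or> q = (1,3) \<or> q = (2,3)"
      using True valid6[of q] by blast
    show ?thesis unfolding u using P Q
      apply (elim disjE)
      apply (simp_all add: volt4 C13_def bv_def bv2_def ell_def ev4 phi_eq[OF alternating_wedge c]
          sprod_Upair wcoord_def sq_def neg two)
      done
  qed
qed

definition C23 :: "'a::field \<Rightarrow> (('a^4) \<times> ('a^4)) list" where
  "C23 t = [bv, bv2, (vec4 0 0 0 1, vec4 0 1 0 1), (vec4 0 0 1 0, vec4 t 0 1 0)]"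

lemma C23_walk: "closed_walk (C23 t)"
  unfolding cw4 C23_def bv_def bv2_def
  by (simp add: is_vertex_def adj_def ev4)

lemma C23_volt:
  assumes two: "(2::'a::field) = 0" and c: "c \<noteq> 0"
  shows "voltage c (C23 (t::'a)) = (\<lambda>u. inverse c * t * sq (2,3) u)"
proof
  fix u :: "(4\<times>4) uprod"
  note neg = neg2[OF two]
  obtain p q where u: "u = Upair p q" by (cases u) auto
  show "voltage c (C23 t) u = inverse c * t * sq (2,3) u"
  proof (cases "fst p < snd p \<and> fst q < snd q")
    case False
    have v0: "voltage c (C23 t) (Upair p q) = 0" using False by (metis voltage_invalid)
    have "Upair p q \<noteq> Upair (2,3) (2,3)" using False by auto
    then have s0: "sq (2,3) (Upair p q) = (0::'a)" unfolding sq_def by (rule if_not_P)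
    show ?thesis by (simp add: u s0 v0)
  next
    case True
    have P: "p = (0,1) \<or> p = (0,2) \<or> p = (0,3) \<or> p = (1,2) \<or> p = (1,3) \<or> p = (2,3)"
      using True valid6[of p] by blast
    have Q: "q = (0,1) \<or> q = (0,2) \<or> q = (0,3) \<or> q = (1,2) \<or> q = (1,3) \<or> q = (2,3)"
      using True valid6[of q] by blast
    show ?thesis unfolding u using P Q
      apply (elim disjE)
      apply (simp_all add: volt4 C23_def bv_def bv2_def ell_def ev4 phi_eq[OF alternating_wedge c]
          sprod_Upair wcoord_def sq_def neg two)
      done
  qed
qed

lemma W2_support:
  assumes two: "(2::'a::field) = 0" and w: "w \<in> W2" and pq: "\<not> (p = q \<and> fst p < snd p)"
  shows "w (Upair p q) = (0::'a)"
proof -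
  obtain n a A where wd: "w = (\<lambda>u. \<Sum>k<(n::nat). a k * sprod (A k) (A k) u)"
    using w unfolding W2_def by blast
  have "sprod (A k) (A k) (Upair p q) = 0" for k
  proof (cases "p = q")
    case True
    then show ?thesis using pq by (simp add: sprod_Upair wcoord_invalid)
  next
    case False
    have "wcoord (A k) p * wcoord (A k) q + wcoord (A k) q * wcoord (A k) p
        = 2 * (wcoord (A k) p * wcoord (A k) q)" by (simp add: algebra_simps)
    then show ?thesis using False two by (simp add: sprod_Upair)
  qed
  then show ?thesis unfolding wd by simp
qed

lemma hd_C: "hd (C01 t) = bv" "hd (C02 t) = bv" "hd (C03 t) = bv" "hd (C12 t) = bv" "hd (C13 t) = bv" "hd (C23 t) = bv"
  "C01 t \<noteq> []" "C02 t \<noteq> []" "C03 t \<noteq> []" "C12 t \<noteq> []" "C13 t \<noteq> []" "C23 t \<noteq> []"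
  by (simp_all add: C01_def C02_def C03_def C12_def C13_def C23_def)

theorem lemma3p12:
  fixes c :: "'a::field" and w :: "'a S2"
  assumes "CHAR('a) = 2" and "c \<noteq> 0" and "w \<in> W2"
  shows "\<exists>xs. closed_walk xs \<and> voltage c xs = w"
proof -
  have two: "(2::'a) = 0" using of_nat_CHAR[where 'a='a] assms(1) by simp
  note c = assms(2)
  define t where "t p = c * w (Upair p p)" for p
  define X1 where "X1 = C13 (t (1,3)) @ C23 (t (2,3))"
  define X2 where "X2 = C12 (t (1,2)) @ X1"
  define X3 where "X3 = C03 (t (0,3)) @ X2"
  define X4 where "X4 = C02 (t (0,2)) @ X3"
  define X5 where "X5 = C01 (t (0,1)) @ X4"
  have ne: "X1 \<noteq> []" "X2 \<noteq> []" "X3 \<noteq> []" "X4 \<noteq> []"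
    by (simp_all add: X1_def X2_def X3_def X4_def hd_C)
  have hd: "hd X1 = bv" "hd X2 = bv" "hd X3 = bv" "hd X4 = bv"
    by (simp_all add: X1_def X2_def X3_def X4_def hd_C)
  have cw: "closed_walk X5"
    unfolding X5_def X4_def X3_def X2_def X1_def
    by (intro closed_walk_append C01_walk C02_walk C03_walk C12_walk C13_walk C23_walk)
       (simp_all add: hd_C X1_def[symmetric] X2_def[symmetric] X3_def[symmetric] X4_def[symmetric] hd)
  have v1: "voltage c X1 = (\<lambda>u. voltage c (C13 (t (1,3))) u + voltage c (C23 (t (2,3))) u)"
    unfolding X1_def by (rule voltage_append) (simp_all add: hd_C)
  have v2: "voltage c X2 = (\<lambda>u. voltage c (C12 (t (1,2))) u + voltage c X1 u)"
    unfolding X2_def by (rule voltage_append) (simp_all add: hd_C ne hd)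
  have v3: "voltage c X3 = (\<lambda>u. voltage c (C03 (t (0,3))) u + voltage c X2 u)"
    unfolding X3_def by (rule voltage_append) (simp_all add: hd_C ne hd)
  have v4: "voltage c X4 = (\<lambda>u. voltage c (C02 (t (0,2))) u + voltage c X3 u)"
    unfolding X4_def by (rule voltage_append) (simp_all add: hd_C ne hd)
  have v5: "voltage c X5 = (\<lambda>u. voltage c (C01 (t (0,1))) u + voltage c X4 u)"
    unfolding X5_def by (rule voltage_append) (simp_all add: hd_C ne hd)
  have vs: "voltage c X5 = (\<lambda>u. inverse c * t (0,1) * sq (0,1) u + (inverse c * t (0,2) * sq (0,2) u
     + (inverse c * t (0,3) * sq (0,3) u + (inverse c * t (1,2) * sq (1,2) u
     + (inverse c * t (1,3) * sq (1,3) u + inverse c * t (2,3) * sq (2,3) u)))))"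
    unfolding v5 v4 v3 v2 v1 C01_volt[OF two c] C02_volt[OF two c] C03_volt[OF two c]
      C12_volt[OF two c] C13_volt[OF two c] C23_volt[OF two c] by simp
  have "voltage c X5 = w"
  proof
    fix u :: "(4\<times>4) uprod"
    obtain p q where u: "u = Upair p q" by (cases u) auto
    show "voltage c X5 u = w u"
    proof (cases "p = q \<and> fst p < snd p")
      case False
      have "w u = 0" unfolding u using W2_support[OF two assms(3) False] .
      moreover have z: "sq r (Upair p q) = (0::'a)" if "fst r < snd r" for r :: "4\<times>4"
      proof -
        have "Upair p q \<noteq> Upair r r" using False that by auto
        then show ?thesis unfolding sq_def by (rule if_not_P)
      qed
      ultimately show ?thesis unfolding vs u
        using z[of "(0,1)"] z[of "(0,2)"] z[of "(0,3)"] z[of "(1,2)"] z[of "(1,3)"] z[of "(2,3)"] by simp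
    next
      case True
      then have pq: "q = p" and pv: "fst p < snd p" by auto
      show ?thesis unfolding vs u pq using valid6[OF pv]
        by (elim disjE) (simp_all add: sq_def t_def c)
    qed
  qed
  then show ?thesis using cw by blast
qed

end
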